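(* Let $n\ge 4$ and let $\mathcal M$ be an IP-SEG* model which is an IP-SEG representation of the chordless cycle $C_n$ and which contains at least one interval segment. Then $\mathcal M$ has exactly one interval arc (and hence exactly one permutation arc).
   Context: Let $L_1$ and $L_2$ be two distinct parallel horizontal lines in the plane. A closed straight line segment is an interval segment if both of its endpoints lie on the same line $L_i$, and a permutation segment if one endpoint lies on $L_1$ and the other on $L_2$. An IP-SEG model is a finite family of interval and permutation segments; its intersection graph has one vertex per segment, adjacent iff the segments intersect. An IP-SEG* model is an IP-SEG model in which all interval segments lie on the same line $L_i$. For $m\ge 3$, $C_m$ is the chordless cycle on $v_1,\dots,v_m$ with $v_i$ adjacent to $v_{i+1}$ (indices mod $m$) and no other edges. An IP-SEG representation of $C_m$ is an IP-SEG model with segments $s(v_1),\dots,s(v_m)$ whose intersection graph is $C_m$ with $s(v_i)$ corresponding to $v_i$. If such a representation contains both interval and permutation segments, an interval arc is a maximal sequence of cyclically consecutive segments $s(v_i),\dots,s(v_j)$ that are all interval segments; a permutation arc is a maximal sequence of cyclically consecutive segments that are all permutation segments. *)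

theory Defs
  imports "HOL-Analysis.Analysis"
begin

text \<open>The two distinct parallel horizontal
lines are L1 = {y = a} and L2 = {y = b} with a \<noteq> b.\<close>

type_synonym point = "real \<times> real"
type_synonym seg = "point \<times> point"

definition seg_set :: "seg \<Rightarrow> point set" where
  "seg_set s = closed_segment (fst s) (snd s)"

definition on_line :: "real \<Rightarrow> point \<Rightarrow> bool" where
  "on_line c p \<longleftrightarrow> snd p = c"

definition interval_seg :: "real \<Rightarrow> real \<Rightarrow> seg \<Rightarrow> bool" where
  "interval_seg a b s \<longleftrightarrow>
     (on_line a (fst s) \<and> on_line a (snd s)) \<or> (on_line b (fst s) \<and> on_line b (snd s))"

definition permutation_seg :: "real \<Rightarrow> real \<Rightarrow> seg \<Rightarrow> bool" where
  "permutation_seg a b s \<longleftrightarrow>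
     (on_line a (fst s) \<and> on_line b (snd s)) \<or> (on_line b (fst s) \<and> on_line a (snd s))"

text \<open>A family of segments indexed by {0..<n} (the segment s i represents vertex v_(i+1)).\<close>

definition IP_SEG_model :: "real \<Rightarrow> real \<Rightarrow> nat \<Rightarrow> (nat \<Rightarrow> seg) \<Rightarrow> bool" where
  "IP_SEG_model a b n s \<longleftrightarrow>
     (\<forall>i<n. interval_seg a b (s i) \<or> permutation_seg a b (s i))"

definition IP_SEG_star_model :: "real \<Rightarrow> real \<Rightarrow> nat \<Rightarrow> (nat \<Rightarrow> seg) \<Rightarrow> bool" where
  "IP_SEG_star_model a b n s \<longleftrightarrow> IP_SEG_model a b n s \<and>
     (\<exists>c\<in>{a, b}. \<forall>i<n. interval_seg a b (s i) \<longrightarrow>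
        on_line c (fst (s i)) \<and> on_line c (snd (s i)))"

definition cycle_adj :: "nat \<Rightarrow> nat \<Rightarrow> nat \<Rightarrow> bool" where
  "cycle_adj n i j \<longleftrightarrow> j = (i + 1) mod n \<or> i = (j + 1) mod n"

definition represents_cycle :: "nat \<Rightarrow> (nat \<Rightarrow> seg) \<Rightarrow> bool" where
  "represents_cycle n s \<longleftrightarrow>
     (\<forall>i<n. \<forall>j<n. i \<noteq> j \<longrightarrow>
        (seg_set (s i) \<inter> seg_set (s j) \<noteq> {} \<longleftrightarrow> cycle_adj n i j))"

definition cyc_arc :: "nat \<Rightarrow> nat \<Rightarrow> nat \<Rightarrow> nat set" where
  "cyc_arc n i k = {(i + t) mod n | t. t < k}"

definition is_cyc_arc :: "nat \<Rightarrow> nat set \<Rightarrow> bool" where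
  "is_cyc_arc n A \<longleftrightarrow> (\<exists>i<n. \<exists>k. 1 \<le> k \<and> k \<le> n \<and> A = cyc_arc n i k)"

definition maximal_arc :: "nat \<Rightarrow> (nat \<Rightarrow> bool) \<Rightarrow> nat set \<Rightarrow> bool" where
  "maximal_arc n P A \<longleftrightarrow> is_cyc_arc n A \<and> (\<forall>i\<in>A. P i) \<and>
     \<not> (\<exists>B. is_cyc_arc n B \<and> (\<forall>i\<in>B. P i) \<and> A \<subset> B)"

definition interval_arc :: "real \<Rightarrow> real \<Rightarrow> nat \<Rightarrow> (nat \<Rightarrow> seg) \<Rightarrow> nat set \<Rightarrow> bool" where
  "interval_arc a b n s A \<longleftrightarrow> maximal_arc n (\<lambda>i. interval_seg a b (s i)) A"

definition permutation_arc :: "real \<Rightarrow> real \<Rightarrow> nat \<Rightarrow> (nat \<Rightarrow> seg) \<Rightarrow> nat set \<Rightarrow> bool" where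
  "permutation_arc a b n s A \<longleftrightarrow> maximal_arc n (\<lambda>i. permutation_seg a b (s i)) A"

end

theory Submission imports Defs begin

lemma seg_pair_iff:
  fixes x1 c1 x2 c2 :: real
  shows "p \<in> closed_segment (x1,c1) (x2,c2) \<longleftrightarrow>
    (\<exists>u. 0 \<le> u \<and> u \<le> 1 \<and> fst p = (1-u)*x1 + u*x2 \<and> snd p = (1-u)*c1 + u*c2)"
  by (cases p) (simp add: in_segment)

lemma real_seg_iff:
  fixes x1 x2 z :: real
  shows "z \<in> closed_segment x1 x2 \<longleftrightarrow> (\<exists>u. 0 \<le> u \<and> u \<le> 1 \<and> z = (1-u)*x1 + u*x2)"
  by (simp add: in_segment)

definition isI :: "real \<Rightarrow> seg \<Rightarrow> bool" where
  "isI c s \<longleftrightarrow> snd (fst s) = c \<and> snd (snd s) = c"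
definition isP :: "real \<Rightarrow> real \<Rightarrow> seg \<Rightarrow> bool" where
  "isP c d s \<longleftrightarrow> (snd (fst s) = c \<and> snd (snd s) = d) \<or> (snd (fst s) = d \<and> snd (snd s) = c)"
definition ft :: "real \<Rightarrow> seg \<Rightarrow> real" where
  "ft c s = (if snd (fst s) = c then fst (fst s) else fst (snd s))"
definition tp :: "real \<Rightarrow> seg \<Rightarrow> real" where
  "tp c s = (if snd (fst s) = c then fst (snd s) else fst (fst s))"
definition Iv :: "seg \<Rightarrow> real set" where
  "Iv s = closed_segment (fst (fst s)) (fst (snd s))"
definition Lt :: "real \<Rightarrow> seg \<Rightarrow> seg \<Rightarrow> bool" where
  "Lt c s t \<longleftrightarrow> ft c s < ft c t \<and> tp c s < tp c t"

lemma segI: "isI c s \<Longrightarrow> p \<in> seg_set s \<longleftrightarrow> snd p = c \<and> fst p \<in> Iv s"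
proof -
  assume "isI c s"
  then obtain x1 x2 where s: "s = ((x1,c),(x2,c))"
    unfolding isI_def by (metis prod.collapse)
  have e: "(1-u)*c + u*c = c" for u :: real by (simp add: algebra_simps)
  show ?thesis unfolding s seg_set_def Iv_def
    by (simp only: seg_pair_iff real_seg_iff fst_conv snd_conv e) (auto simp: algebra_simps)
qed

lemma segP: "c \<noteq> d \<Longrightarrow> isP c d s \<Longrightarrow> seg_set s = closed_segment (ft c s, c) (tp c s, d)"
  unfolding isP_def seg_set_def ft_def tp_def
  by (cases s) (auto simp: closed_segment_commute prod_eq_iff)

lemma onP: "(c::real) \<noteq> d \<Longrightarrow> p \<in> closed_segment (x,c) (y::real,d) \<Longrightarrow> snd p = c \<Longrightarrow> fst p = (x::real)"
proof -
  assume cd: "c \<noteq> d" and p: "p \<in> closed_segment (x,c) (y,d)" and sp: "snd p = c"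
  then obtain u where u: "0 \<le> u" "u \<le> 1" "fst p = (1-u)*x + u*y" "snd p = (1-u)*c + u*d"
    by (auto simp: seg_pair_iff)
  have "u * (d - c) = 0" using u(4) sp by (auto simp: algebra_simps)
  hence "u = 0" using cd by auto
  thus ?thesis using u by simp
qed

lemma PP_disj:
  fixes x1 x2 y1 y2 c d :: real
  assumes cd: "c \<noteq> d" and lt: "x1 < x2" "y1 < y2"
  shows "closed_segment (x1,c) (y1,d) \<inter> closed_segment (x2,c) (y2,d) = {}"
proof (rule ccontr)
  assume "\<not> ?thesis"
  then obtain p where "p \<in> closed_segment (x1,c) (y1,d)" "p \<in> closed_segment (x2,c) (y2,d)" by blast
  then obtain u w where u: "0 \<le> u" "u \<le> 1" "fst p = (1-u)*x1 + u*y1" "snd p = (1-u)*c + u*d"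
    and v: "0 \<le> w" "w \<le> 1" "fst p = (1-w)*x2 + w*y2" "snd p = (1-w)*c + w*d"
    by (auto simp: seg_pair_iff)
  have "(u - w) * (d - c) = 0" using u(4) v(4) by (simp add: algebra_simps)
  hence uv: "u = w" using cd by auto
  have "(1-u)*(x2-x1) + u*(y2-y1) > 0"
  proof (cases "u = 0")
    case True thus ?thesis using lt by simp
  next
    case False
    hence "u*(y2-y1) > 0" using u lt by simp
    moreover have "(1-u)*(x2-x1) \<ge> 0" using u lt by simp
    ultimately show ?thesis by linarith
  qed
  thus False using u(3) v(3) uv by (simp add: algebra_simps)
qed

lemma PP_meet:
  fixes x1 x2 y1 y2 c d :: real
  assumes "\<not> ((x1 < x2 \<and> y1 < y2) \<or> (x2 < x1 \<and> y2 < y1))"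
  shows "closed_segment (x1,c) (y1,d) \<inter> closed_segment (x2,c) (y2,d) \<noteq> {}"
proof -
  have "\<exists>u. 0 \<le> u \<and> u \<le> 1 \<and> (1-u)*x1 + u*y1 = (1-u)*x2 + u*y2"
  proof (cases "x1 = x2")
    case True thus ?thesis by (intro exI[of _ 0]) simp
  next
    case False
    define u where "u = (x1 - x2) / ((x1 - x2) - (y1 - y2))"
    have ne: "(x1 - x2) - (y1 - y2) \<noteq> 0" using assms False by auto
    have eq: "(1-u)*x1 + u*y1 = (1-u)*x2 + u*y2"
    proof -
      have "(1-u)*(x1-x2) + u*(y1-y2) = 0"
        unfolding u_def using ne by (simp add: field_simps)
      thus ?thesis by (simp add: algebra_simps)
    qed
    have "0 \<le> u \<and> u \<le> 1"
      using assms False unfolding u_def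
      by (cases "x1 < x2") (auto simp: divide_simps)
    thus ?thesis using eq by blast
  qed
  then obtain u where u: "0 \<le> u" "u \<le> 1" "(1-u)*x1 + u*y1 = (1-u)*x2 + u*y2" by blast
  let ?p = "((1-u)*x1 + u*y1, (1-u)*c + u*d)"
  have "?p \<in> closed_segment (x1,c) (y1,d)" unfolding seg_pair_iff using u by auto
  moreover have "?p \<in> closed_segment (x2,c) (y2,d)" unfolding seg_pair_iff using u
    by (intro exI[of _ u]) simp
  ultimately show ?thesis by blast
qed

lemma II: "isI c s \<Longrightarrow> isI c s' \<Longrightarrow> (seg_set s \<inter> seg_set s' \<noteq> {}) \<longleftrightarrow> (Iv s \<inter> Iv s' \<noteq> {})"
proof
  assume a: "isI c s" "isI c s'" "seg_set s \<inter> seg_set s' \<noteq> {}"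
  then obtain p where "p \<in> seg_set s" "p \<in> seg_set s'" by blast
  thus "Iv s \<inter> Iv s' \<noteq> {}" using a segI by blast
next
  assume a: "isI c s" "isI c s'" "Iv s \<inter> Iv s' \<noteq> {}"
  then obtain z where "z \<in> Iv s" "z \<in> Iv s'" by blast
  hence "(z,c) \<in> seg_set s" "(z,c) \<in> seg_set s'" using a segI by auto
  thus "seg_set s \<inter> seg_set s' \<noteq> {}" by blast
qed

lemma IP: "c \<noteq> d \<Longrightarrow> isI c s \<Longrightarrow> isP c d p \<Longrightarrow> (seg_set s \<inter> seg_set p \<noteq> {}) \<longleftrightarrow> ft c p \<in> Iv s"
proof
  assume a: "c \<noteq> d" "isI c s" "isP c d p" "seg_set s \<inter> seg_set p \<noteq> {}"
  then obtain q where q: "q \<in> seg_set s" "q \<in> seg_set p" by blast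
  hence "snd q = c" "fst q \<in> Iv s" using a segI by auto
  moreover have "fst q = ft c p" using onP[OF a(1)] q(2) segP[OF a(1) a(3)] \<open>snd q = c\<close> by auto
  ultimately show "ft c p \<in> Iv s" by simp
next
  assume a: "c \<noteq> d" "isI c s" "isP c d p" "ft c p \<in> Iv s"
  have "(ft c p, c) \<in> seg_set p" using segP[OF a(1) a(3)] by simp
  moreover have "(ft c p, c) \<in> seg_set s" using segI[OF a(2)] a(4) by simp
  ultimately show "seg_set s \<inter> seg_set p \<noteq> {}" by blast
qed

lemma PP: "c \<noteq> d \<Longrightarrow> isP c d s \<Longrightarrow> isP c d p \<Longrightarrow> (seg_set s \<inter> seg_set p = {}) \<longleftrightarrow> (Lt c s p \<or> Lt c p s)"
  using PP_disj[of c d "ft c s" "ft c p" "tp c s" "tp c p"] PP_disj[of c d "ft c p" "ft c s" "tp c p" "tp c s"]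
    PP_meet[of "ft c s" "ft c p" "tp c s" "tp c p" c d]
  by (auto simp: segP Lt_def Int_commute)

lemma real_seg_split:
  fixes z z1 z2 w :: real
  assumes "z \<in> closed_segment z1 z2"
  shows "z \<in> closed_segment z1 w \<or> z \<in> closed_segment w z2"
  using assms by (auto simp: closed_segment_eq_real_ivl split: if_split_asm)

lemma cover:
  fixes I :: "nat \<Rightarrow> real set"
  assumes conv: "\<And>k. convex (I k)"
    and ov: "\<And>k. i \<le> k \<Longrightarrow> k < i + m \<Longrightarrow> I k \<inter> I (Suc k) \<noteq> {}"
    and z1: "z1 \<in> I i" and z2: "z2 \<in> I (i+m)" and z: "z \<in> closed_segment z1 z2"
  shows "\<exists>k. i \<le> k \<and> k \<le> i + m \<and> z \<in> I k"
  using ov z2 z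
proof (induction m arbitrary: z2 z)
  case 0
  thus ?case using closed_segment_subset[OF z1 _ conv] by (intro exI[of _ i]) auto
next
  case (Suc m)
  obtain w where w: "w \<in> I (i+m)" "w \<in> I (Suc (i+m))" using Suc.prems(1)[of "i+m"] by auto
  from real_seg_split[OF Suc.prems(3), of w] show ?case
  proof
    assume "z \<in> closed_segment z1 w"
    with Suc.IH[of w z] Suc.prems(1) w(1) show ?thesis by fastforce
  next
    assume "z \<in> closed_segment w z2"
    hence "z \<in> I (i + Suc m)" using closed_segment_subset[OF w(2) _ conv] Suc.prems(2) by auto
    thus ?thesis by (intro exI[of _ "i + Suc m"]) simp
  qed
qed

lemma KEY:
  fixes a1 a2 b1 b2 :: real
  assumes "convex A" "convex B" "A \<inter> B = {}" "a1 \<in> A" "a2 \<in> A" "b1 \<in> B" "b2 \<in> B"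
  shows "\<exists>z. z \<in> closed_segment a1 b1 \<and> z \<in> closed_segment a2 b2"
proof -
  have hA: "closed_segment a1 a2 \<subseteq> A" using assms closed_segment_subset by blast
  have hB: "closed_segment b1 b2 \<subseteq> B" using assms closed_segment_subset by blast
  have dj: "closed_segment a1 a2 \<inter> closed_segment b1 b2 = {}" using hA hB assms(3) by blast
  show ?thesis
  proof (cases "max a1 a2 < min b1 b2")
    case True thus ?thesis by (intro exI[of _ "max a1 a2"]) (auto simp: closed_segment_eq_real_ivl)
  next
    case F1: False
    show ?thesis
    proof (cases "max b1 b2 < min a1 a2")
      case True thus ?thesis by (intro exI[of _ "min a1 a2"]) (auto simp: closed_segment_eq_real_ivl)
    next
      case False
      let ?w = "max (min a1 a2) (min b1 b2)"
      have "?w \<in> closed_segment a1 a2" "?w \<in> closed_segment b1 b2"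
        using F1 False by (auto simp: closed_segment_eq_real_ivl)
      thus ?thesis using dj by blast
    qed
  qed
qed


lemma adj_succ: "k+1 < n \<Longrightarrow> cycle_adj n k (k+1)"
  by (simp add: cycle_adj_def)
lemma adj_last: "2 \<le> n \<Longrightarrow> cycle_adj n 0 (n-1)"
  by (simp add: cycle_adj_def)
lemma nonadj: "i+2 \<le> j \<Longrightarrow> j < n \<Longrightarrow> \<not>(i=0 \<and> j=n-1) \<Longrightarrow> \<not> cycle_adj n i j"
proof -
  assume a: "i+2 \<le> j" "j < n" "\<not>(i=0 \<and> j=n-1)"
  have 1: "(i+1) mod n = i+1" using a by simp
  have 2: "(j+1) mod n \<noteq> i"
  proof (cases "j + 1 < n")
    case True thus ?thesis using a by simp
  next
    case False
    hence "j + 1 = n" using a by simp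
    thus ?thesis using a by auto
  qed
  show ?thesis unfolding cycle_adj_def using 1 2 a by auto
qed

lemma excl: "c \<noteq> d \<Longrightarrow> isI c s \<Longrightarrow> \<not> isP c d s"
  by (auto simp: isI_def isP_def)

locale cyc =
  fixes n :: nat and u :: "nat \<Rightarrow> seg" and c d :: real
  assumes cd: "c \<noteq> d" and n4: "4 \<le> n"
    and kind: "\<And>i. i < n \<Longrightarrow> isI c (u i) \<or> isP c d (u i)"
    and rep: "represents_cycle n u"
begin

abbreviation M where "M i j \<equiv> seg_set (u i) \<inter> seg_set (u j) \<noteq> {}"

lemma Msucc: "k+1 < n \<Longrightarrow> M k (k+1)"
  using rep adj_succ[of k n] unfolding represents_cycle_def by auto
lemma M0: "M 0 (n-1)"
  using rep adj_last[of n] n4 unfolding represents_cycle_def by auto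
lemma nM: "i+2 \<le> j \<Longrightarrow> j < n \<Longrightarrow> \<not>(i=0 \<and> j=n-1) \<Longrightarrow> \<not> M i j"
  using rep nonadj[of i j n] unfolding represents_cycle_def by auto

lemma notallI: "\<not> (\<forall>i<n. isI c (u i))"
proof
  assume all: "\<forall>i<n. isI c (u i)"
  have ov: "Iv (u k) \<inter> Iv (u (k+1)) \<noteq> {}" if "k+1 < n" for k
    using Msucc[OF that] II[of c "u k" "u (k+1)"] all that by auto
  have "Iv (u 0) \<inter> Iv (u 1) \<noteq> {}" using ov[of 0] n4 by simp
  then obtain z1 where z1: "z1 \<in> Iv (u 0)" "z1 \<in> Iv (u 1)" by blast
  have "Iv (u 1) \<inter> Iv (u 2) \<noteq> {}" using ov[of 1, unfolded one_add_one] n4 by simp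
  then obtain z2 where z2: "z2 \<in> Iv (u 1)" "z2 \<in> Iv (u 2)" by blast
  have "Iv (u 2) \<inter> Iv (u 3) \<noteq> {}" using ov[of 2] n4 by simp
  then obtain z3 where z3: "z3 \<in> Iv (u 2)" "z3 \<in> Iv (u 3)" by blast
  obtain z0 where z0: "z0 \<in> Iv (u (n-1))" "z0 \<in> Iv (u 0)"
    using M0 II[of c "u 0" "u (n-1)"] all n4 by auto
  have d02: "Iv (u 0) \<inter> Iv (u 2) = {}"
    using nM[of 0 2] II[of c "u 0" "u 2"] all n4 by auto
  obtain z where zA: "z \<in> closed_segment z1 z2" and zB: "z \<in> closed_segment z0 z3"
    using KEY[OF _ _ d02 z1(1) z0(2) z2(2) z3(1)] by (auto simp: Iv_def)
  have "z \<in> Iv (u 1)" using closed_segment_subset[OF z1(2) z2(1)] zA by (auto simp: Iv_def)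
  moreover obtain k where k: "3 \<le> k" "k \<le> 3 + (n-4)" "z \<in> Iv (u k)"
  proof -
    have "\<exists>k. 3 \<le> k \<and> k \<le> 3 + (n-4) \<and> z \<in> Iv (u k)"
      apply (rule cover[of "\<lambda>k. Iv (u k)" 3 "n-4" z3 z0])
      using ov n4 z3 z0 zB by (auto simp: Iv_def closed_segment_commute)
    thus ?thesis using that by blast
  qed
  ultimately have "Iv (u 1) \<inter> Iv (u k) \<noteq> {}" by blast
  hence "M 1 k" using II[of c "u 1" "u k"] all k n4 by auto
  moreover have "k < n" using k n4 by linarith
  ultimately show False using nM[of 1 k] k(1) by simp
qed

lemma comp:
  assumes "e < n" "\<forall>k\<le>e. isP c d (u k)" "isP c d (u t)" "\<forall>k\<le>e. \<not> M k t"
  shows "(\<forall>k\<le>e. Lt c (u k) (u t)) \<or> (\<forall>k\<le>e. Lt c (u t) (u k))"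
  using assms
proof (induction e)
  case 0
  thus ?case using PP[OF cd, of "u 0" "u t"] by auto
next
  case (Suc e)
  have IH: "(\<forall>k\<le>e. Lt c (u k) (u t)) \<or> (\<forall>k\<le>e. Lt c (u t) (u k))"
    using Suc by auto
  have new: "Lt c (u (Suc e)) (u t) \<or> Lt c (u t) (u (Suc e))"
    using PP[OF cd, of "u (Suc e)" "u t"] Suc.prems by auto
  have ne: "M e (e+1)" using Msucc[of e] Suc.prems by auto
  have pe: "isP c d (u e)" "isP c d (u (Suc e))" using Suc.prems by auto
  have no1: "\<not> (Lt c (u e) (u t) \<and> Lt c (u t) (u (Suc e)))"
  proof
    assume "Lt c (u e) (u t) \<and> Lt c (u t) (u (Suc e))"
    hence "Lt c (u e) (u (Suc e))" by (auto simp: Lt_def)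
    thus False using PP[OF cd pe] ne by auto
  qed
  have no2: "\<not> (Lt c (u t) (u e) \<and> Lt c (u (Suc e)) (u t))"
  proof
    assume "Lt c (u t) (u e) \<and> Lt c (u (Suc e)) (u t)"
    hence "Lt c (u (Suc e)) (u e)" by (auto simp: Lt_def)
    thus False using PP[OF cd pe] ne by auto
  qed
  show ?case using IH new no1 no2 le_Suc_eq by auto
qed

lemma oneRun:
  assumes e: "e + 1 < n" and P0: "\<forall>k\<le>e. isP c d (u k)"
    and Ie: "isI c (u (e+1))" and Ilast: "isI c (u (n-1))"
    and h: "h \<le> e" and left: "\<forall>j<n. isP c d (u j) \<longrightarrow> ft c (u h) \<le> ft c (u j)"
  shows "\<forall>j. e < j \<longrightarrow> j < n \<longrightarrow> isI c (u j)"
proof (rule ccontr)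
  assume nt: "\<not> ?thesis"
  define S where "S = {j. e < j \<and> j < n \<and> \<not> isI c (u j)}"
  have fin: "finite S" unfolding S_def by auto
  have ne: "S \<noteq> {}" using nt unfolding S_def by auto
  define g' where "g' = Min S"
  define g where "g = Max S"
  have g'S: "g' \<in> S" and gS: "g \<in> S" using fin ne Min_in Max_in g'_def g_def by auto
  have g'g: "g' \<le> g" using fin ne g'_def g_def gS Min_le by auto
  have g'1: "e + 1 < g'" using g'S Ie unfolding S_def by (metis (mono_tags) Suc_eq_plus1 Suc_lessI mem_Collect_eq)
  have g2: "g < n - 1" using gS Ilast unfolding S_def
    by (metis (mono_tags) Suc_diff_1 bot_nat_0.not_eq_extremum less_Suc_eq less_nat_zero_code mem_Collect_eq)
  have Pg': "isP c d (u g')" and Pg: "isP c d (u g)" using g'S gS kind unfolding S_def by auto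
  have run1: "isI c (u k)" if "e < k" "k < g'" for k
  proof (rule ccontr)
    assume "\<not> isI c (u k)"
    hence "k \<in> S" using that g'S unfolding S_def by auto
    hence "g' \<le> k" using fin g'_def Min_le by auto
    thus False using that by auto
  qed
  have run2: "isI c (u k)" if "g < k" "k < n" for k
  proof (rule ccontr)
    assume "\<not> isI c (u k)"
    hence "k \<in> S" using that gS unfolding S_def by auto
    hence "k \<le> g" using fin g_def Max_ge by auto
    thus False using that by auto
  qed
  let ?F = "\<lambda>k. ft c (u k)"
  have F1: "?F e \<in> Iv (u (e+1))" using Msucc[of e] e IP[OF cd Ie, of "u e"] P0 by (auto simp: Int_commute)
  have F2: "?F g' \<in> Iv (u (g'-1))"
  proof -
    have "M (g'-1) g'" using Msucc[of "g'-1"] g'1 g'S unfolding S_def by auto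
    moreover have "isI c (u (g'-1))" using run1 g'1 by auto
    ultimately show ?thesis using IP[OF cd _ Pg'] by auto
  qed
  have F3: "?F 0 \<in> Iv (u (n-1))" using M0 IP[OF cd Ilast, of "u 0"] P0 by (auto simp: Int_commute)
  have F4: "?F g \<in> Iv (u (g+1))"
  proof -
    have "M g (g+1)" using Msucc[of g] g2 by auto
    hence "seg_set (u (g+1)) \<inter> seg_set (u g) \<noteq> {}" by (simp add: Int_commute)
    moreover have "isI c (u (g+1))" using run2 g2 by auto
    ultimately show ?thesis using IP[OF cd _ Pg] by blast
  qed
  have ord: "ft c (u k) < ?F t" if "k \<le> e" and tS: "t \<in> S" for k t
  proof -
    have tP: "isP c d (u t)" using tS kind unfolding S_def by auto
    have tr: "e + 1 < t" "t < n - 1" using tS fin g'_def g_def Min_le Max_ge g'1 g2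
      by (metis le_less_trans less_le_trans)+
    have nm: "\<forall>k\<le>e. \<not> M k t" using nM tr by auto
    have c1: "(\<forall>k\<le>e. Lt c (u k) (u t)) \<or> (\<forall>k\<le>e. Lt c (u t) (u k))"
      using comp[OF _ P0 tP nm] e by auto
    have "t < n" using tr by linarith
    hence "ft c (u h) \<le> ft c (u t)" using left tP by blast
    hence "\<not> Lt c (u t) (u h)" unfolding Lt_def by linarith
    hence "\<forall>k\<le>e. Lt c (u k) (u t)" using c1 h by auto
    thus ?thesis using that unfolding Lt_def by auto
  qed
  define z where "z = max (?F 0) (?F e)"
  have zl: "?F 0 < ?F g" "?F e < ?F g" "?F 0 < ?F g'" "?F e < ?F g'"
    using ord[of 0 g] ord[of e g] ord[of 0 g'] ord[of e g'] gS g'S by auto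
  have conv: "\<And>k. convex (Iv (u k))" by (simp add: Iv_def)
  have ov1: "Iv (u k) \<inter> Iv (u (Suc k)) \<noteq> {}" if "e+1 \<le> k" "k < e+1 + (g'-1-(e+1))" for k
  proof -
    have "M k (k+1)" "isI c (u k)" "isI c (u (Suc k))" using that Msucc[of k] run1 g'1 g2 g'g by auto
    thus ?thesis using II by auto
  qed
  have z2a: "?F g' \<in> Iv (u (e + 1 + (g' - 1 - (e + 1))))" proof -
    have "e + 1 + (g' - 1 - (e + 1)) = g' - 1" using g'1 by arith
    show ?thesis unfolding \<open>e + 1 + (g' - 1 - (e + 1)) = g' - 1\<close> by (rule F2)
  qed
  have zza: "z \<in> closed_segment (?F e) (?F g')" unfolding z_def using zl
    by (auto simp: closed_segment_eq_real_ivl)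
  obtain k1 where k1: "e+1 \<le> k1" "k1 \<le> (e+1) + (g'-1-(e+1))" "z \<in> Iv (u k1)"
    using cover[where I="\<lambda>k. Iv (u k)", OF conv ov1 F1 z2a zza] by blast
  have ov2: "Iv (u k) \<inter> Iv (u (Suc k)) \<noteq> {}" if "g+1 \<le> k" "k < g+1 + (n-1-(g+1))" for k
  proof -
    have "M k (k+1)" "isI c (u k)" "isI c (u (Suc k))" using that Msucc[of k] run2 g2 by auto
    thus ?thesis using II by auto
  qed
  have z2b: "?F 0 \<in> Iv (u (g + 1 + (n - 1 - (g + 1))))" proof -
    have "g + 1 + (n - 1 - (g + 1)) = n - 1" using g2 by arith
    show ?thesis unfolding \<open>g + 1 + (n - 1 - (g + 1)) = n - 1\<close> by (rule F3)
  qed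
  have zzb: "z \<in> closed_segment (?F g) (?F 0)" unfolding z_def using zl
    by (auto simp: closed_segment_eq_real_ivl)
  obtain k2 where k2: "g+1 \<le> k2" "k2 \<le> (g+1) + (n-1-(g+1))" "z \<in> Iv (u k2)"
    using cover[where I="\<lambda>k. Iv (u k)", OF conv ov2 F4 z2b zzb] by blast
  have "isI c (u k1)" "isI c (u k2)" using k1 k2 run1 run2 g'1 g2 by auto
  hence "M k1 k2" using II k1 k2 by blast
  moreover have "\<not> M k1 k2" using nM[of k1 k2] k1 k2 g'1 g2 g'g by auto
  ultimately show False by simp
qed

end

lemma modsh: "((x::nat) + r) mod n = (y + r) mod n \<longleftrightarrow> x mod n = y mod n"
  by (simp add: ab_semigroup_add_class.add_ac(1) add.commute nat_mod_eq_iff)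

lemma adj_rot:
  assumes "i < n" "j < n"
  shows "cycle_adj n ((i+r) mod n) ((j+r) mod n) \<longleftrightarrow> cycle_adj n i j"
proof -
  have 1: "((j+r) mod n = ((i+r) mod n + 1) mod n) \<longleftrightarrow> j = (i+1) mod n"
  proof -
    have "((i+r) mod n + 1) mod n = ((i+1)+r) mod n" by (metis mod_add_left_eq add.commute add.assoc)
    thus ?thesis using modsh[of j r n "i+1"] assms by simp
  qed
  have 2: "((i+r) mod n = ((j+r) mod n + 1) mod n) \<longleftrightarrow> i = (j+1) mod n"
  proof -
    have "((j+r) mod n + 1) mod n = ((j+1)+r) mod n" by (metis mod_add_left_eq add.commute add.assoc)
    thus ?thesis using modsh[of i r n "j+1"] assms by simp
  qed
  show ?thesis unfolding cycle_adj_def using 1 2 by simp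
qed

lemma rot_rep:
  assumes "represents_cycle n s"
  shows "represents_cycle n (\<lambda>j. s ((j + r) mod n))"
  unfolding represents_cycle_def
proof (intro allI impI)
  fix i j assume ij: "i < n" "j < n" "i \<noteq> j"
  have ne: "(i+r) mod n \<noteq> (j+r) mod n" using modsh[of i r n j] ij by simp
  have lt: "(i+r) mod n < n" "(j+r) mod n < n" using ij by auto
  show "(seg_set (s ((i + r) mod n)) \<inter> seg_set (s ((j + r) mod n)) \<noteq> {}) = cycle_adj n i j"
    using assms[unfolded represents_cycle_def, rule_format, OF lt ne] adj_rot[OF ij(1,2)] by simp
qed

lemma AL0:
  assumes n: "0 < n" and r: "r < n" and k: "1 \<le> k" "k \<le> n"
    and P: "\<forall>t<n. P ((r+t) mod n) \<longleftrightarrow> t < k"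
  shows "\<exists>!A. maximal_arc n P A"
proof -
  let ?A = "cyc_arc n r k"
  have sub: "x < n" if B1: "is_cyc_arc n B" and B2: "x \<in> B" for B x
  proof -
    obtain i k' where "B = cyc_arc n i k'" using B1 unfolding is_cyc_arc_def by blast
    then obtain t where "x = (i + t) mod n" using B2 unfolding cyc_arc_def by blast
    thus ?thesis using n by simp
  qed
  have A1: "x < n \<and> P x" if xA: "x \<in> ?A" for x
  proof -
    obtain t where t: "x = (r + t) mod n" "t < k" using xA unfolding cyc_arc_def by blast
    have "t < n" using t k by simp
    hence "P x" using P t by blast
    thus ?thesis using t n by simp
  qed
  have A2: "x \<in> ?A" if xx: "x < n" "P x" for x
  proof -
    define t where "t = (x + n - r) mod n"
    have t: "t < n" using n t_def by simp
    have rt: "(r + t) mod n = x"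
    proof -
      have "(r + t) mod n = (r + (x + n - r)) mod n" unfolding t_def by (rule mod_add_right_eq)
      also have "r + (x + n - r) = x + n" using r by simp
      finally show ?thesis using xx by simp
    qed
    hence "t < k" using P t xx by metis
    thus "x \<in> ?A" unfolding cyc_arc_def using rt by blast
  qed
  have arcA: "is_cyc_arc n ?A" unfolding is_cyc_arc_def using r k by blast
  have allB: "B \<subseteq> ?A" if "is_cyc_arc n B" "\<forall>i\<in>B. P i" for B
    using that sub A2 by blast
  have maxA: "maximal_arc n P ?A"
    unfolding maximal_arc_def using arcA A1 allB by blast
  show ?thesis
  proof (rule ex1I[of _ ?A])
    show "maximal_arc n P ?A" by (rule maxA)
  next
    fix B assume B: "maximal_arc n P B"
    hence Bs: "B \<subseteq> ?A" using allB unfolding maximal_arc_def by blast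
    have "\<not> B \<subset> ?A" using B arcA A1 unfolding maximal_arc_def by blast
    thus "B = ?A" using Bs by blast
  qed
qed

lemma AL:
  assumes n: "0 < n" and r: "r < n" and k: "1 \<le> k" "k < n"
    and P: "\<forall>t<n. P ((r+t) mod n) \<longleftrightarrow> t < k"
    and Q: "\<forall>i<n. Q i \<longleftrightarrow> \<not> P i"
  shows "(\<exists>!A. maximal_arc n P A) \<and> (\<exists>!A. maximal_arc n Q A)"
proof
  show "\<exists>!A. maximal_arc n P A" using AL0[OF n r k(1)] k P by auto
  have "\<forall>t<n. Q (((r+k) mod n + t) mod n) \<longleftrightarrow> t < n - k"
  proof (intro allI impI)
    fix t assume t: "t < n"
    have e: "((r+k) mod n + t) mod n = (r + (k+t)) mod n" by (metis mod_add_left_eq add.assoc)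
    show "Q (((r+k) mod n + t) mod n) \<longleftrightarrow> t < n - k"
    proof (cases "k + t < n")
      case True thus ?thesis using P Q e n k by auto
    next
      case False
      have "(r + (k+t)) mod n = (r + (k+t-n)) mod n"
      proof -
        have "r + (k+t) = (r + (k+t-n)) + n" using False by simp
        thus ?thesis by (metis mod_add_self2)
      qed
      moreover have "k + t - n < k" using t False by simp
      ultimately have "P ((r + (k+t-n)) mod n)" using P k t by auto
      hence "\<not> Q (((r+k) mod n + t) mod n)" using Q e \<open>(r + (k+t)) mod n = (r + (k+t-n)) mod n\<close> n by auto
      thus ?thesis using False by auto
    qed
  qed
  thus "\<exists>!A. maximal_arc n Q A" using AL0[OF n, of "(r+k) mod n" "n-k" Q] k by auto
qed


lemma mod_inv: "0 < (n::nat) \<Longrightarrow> r < n \<Longrightarrow> i < n \<Longrightarrow> (r + (i + n - r) mod n) mod n = i"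
proof -
  assume a: "0 < n" "r < n" "i < n"
  have "(r + (i + n - r) mod n) mod n = (r + (i + n - r)) mod n" by (rule mod_add_right_eq)
  also have "r + (i + n - r) = i + n" using a by simp
  finally show ?thesis using a by simp
qed

lemma rot_idx: "(j + (x::nat) mod n) mod n = (x + j) mod n"
  unfolding mod_add_right_eq by (simp add: add.commute)

theorem mainTheorem5:
  fixes a b :: real and n :: nat and s :: "nat \<Rightarrow> seg"
  assumes "a \<noteq> b"
    and "n \<ge> 4"
    and "IP_SEG_star_model a b n s"
    and "represents_cycle n s"
    and "\<exists>i<n. interval_seg a b (s i)"
  shows "(\<exists>!A. interval_arc a b n s A) \<and> (\<exists>!A. permutation_arc a b n s A)"
proof -
  have n0: "0 < n" using assms(2) by simp
  obtain c where c: "c \<in> {a,b}"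
    and cI: "\<forall>i<n. interval_seg a b (s i) \<longrightarrow> on_line c (fst (s i)) \<and> on_line c (snd (s i))"
    and typ0: "\<forall>i<n. interval_seg a b (s i) \<or> permutation_seg a b (s i)"
    using assms(3) unfolding IP_SEG_star_model_def IP_SEG_model_def by blast
  define d where "d = (if c = a then b else a)"
  have cd: "c \<noteq> d" using c assms(1) d_def by auto
  have Ieq: "interval_seg a b (s i) \<longleftrightarrow> isI c (s i)" if "i < n" for i
    using cI c that unfolding interval_seg_def isI_def on_line_def by auto
  have Peq: "permutation_seg a b x \<longleftrightarrow> isP c d x" for x
    using c d_def assms(1) unfolding permutation_seg_def isP_def on_line_def by auto
  have kind: "isI c (s i) \<or> isP c d (s i)" if "i < n" for i using typ0 Ieq Peq that by auto
  define w where "w = (\<lambda>r j. s ((j + r) mod n))"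
  have loc: "cyc n (w r) c d" for r
  proof
    show "c \<noteq> d" by (rule cd)
    show "4 \<le> n" using assms(2) .
    show "isI c (w r i) \<or> isP c d (w r i)" if "i < n" for i
      unfolding w_def using kind n0 by simp
    show "represents_cycle n (w r)" unfolding w_def using rot_rep[OF assms(4)] .
  qed
  have "\<not> (\<forall>i<n. isI c (w 0 i))" using cyc.notallI[OF loc[of 0]] .
  then obtain t0 where t0: "t0 < n" "isP c d (s t0)" using kind unfolding w_def by auto
  define Ps where "Ps = {j. j < n \<and> isP c d (s j)}"
  have finPs: "finite Ps" and nePs: "Ps \<noteq> {}" using t0 unfolding Ps_def by auto
  define m where "m = Min ((\<lambda>j. ft c (s j)) ` Ps)"
  have "m \<in> (\<lambda>j. ft c (s j)) ` Ps" unfolding m_def using finPs nePs by (intro Min_in) auto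
  then obtain t where tPs: "t \<in> Ps" and tm: "ft c (s t) = m" by auto
  have tn: "t < n" and tP: "isP c d (s t)" using tPs unfolding Ps_def by auto
  have left: "\<forall>j<n. isP c d (s j) \<longrightarrow> ft c (s t) \<le> ft c (s j)"
    using finPs tm unfolding m_def Ps_def by auto
  obtain i0 where i0: "i0 < n" "isI c (s i0)" using assms(5) Ieq by auto
  define K where "K = {k. k < n \<and> isI c (s ((t+k) mod n))}"
  have finK: "finite K" unfolding K_def by auto
  have neK: "K \<noteq> {}"
  proof -
    have "(i0 + n - t) mod n \<in> K" unfolding K_def using mod_inv[OF n0 tn i0(1)] i0 n0 by auto
    thus ?thesis by auto
  qed
  define q where "q = Max K"
  have qK: "q \<in> K" using finK neK q_def by auto
  have qn: "q < n" and qI: "isI c (s ((t+q) mod n))" using qK unfolding K_def by auto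
  have qmax: "isP c d (s ((t+k) mod n))" if "q < k" "k < n" for k
  proof -
    have "k \<notin> K" using that finK q_def Max_ge by fastforce
    thus ?thesis using that kind[of "(t+k) mod n"] n0 unfolding K_def by auto
  qed
  define r where "r = (t + q + 1) mod n"
  define u where "u = w r"
  have uj: "u j = s ((t + (q+1+j)) mod n)" for j
    unfolding u_def w_def r_def rot_idx by (simp add: ac_simps)
  define h where "h = n - 1 - q"
  have Ph: "isP c d (u j)" if "j \<le> h" for j
  proof (cases "q + 1 + j < n")
    case True
    have "isP c d (s ((t + (q+1+j)) mod n))" using qmax[of "q+1+j"] True by simp
    thus ?thesis unfolding uj .
  next
    case False
    hence "q + 1 + j = n" using that h_def qn by auto
    hence "u j = s ((t + n) mod n)" unfolding uj by simp
    thus ?thesis using tP tn by simp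
  qed
  have uh: "u h = s t" using uj h_def qn tn by simp
  have Ilast: "isI c (u (n-1))"
  proof -
    have "t + (q + 1 + (n-1)) = (t + q) + n" using n0 by simp
    hence "u (n-1) = s ((t+q) mod n)" unfolding uj by (metis mod_add_self2)
    thus ?thesis using qI by simp
  qed
  define e where "e = (LEAST j. isI c (u (j+1)))"
  have e1: "isI c (u (e+1))" unfolding e_def
    by (rule LeastI[of _ "n-2"]) (use Ilast assms(2) in \<open>simp add: numeral_2_eq_2 Suc_diff_Suc\<close>)
  have e2: "e \<le> n - 2" unfolding e_def
    by (rule Least_le) (use Ilast assms(2) in \<open>simp add: numeral_2_eq_2 Suc_diff_Suc\<close>)
  have e3: "\<not> isI c (u (j+1))" if "j < e" for j using not_less_Least[OF that[unfolded e_def]] by (simp add: e_def)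
  have excl': "\<not> (isI c x \<and> isP c d x)" for x using excl[OF cd] by blast
  have he: "h \<le> e"
  proof (rule ccontr)
    assume "\<not> h \<le> e"
    hence "isP c d (u (e+1))" using Ph by auto
    thus False using e1 excl' by blast
  qed
  have uloc: "cyc n u c d" unfolding u_def by (rule loc)
  have P0: "\<forall>k\<le>e. isP c d (u k)"
  proof (intro allI impI)
    fix k assume k: "k \<le> e"
    show "isP c d (u k)"
    proof (cases k)
      case 0 thus ?thesis using Ph by simp
    next
      case (Suc k')
      hence "\<not> isI c (u k)" using e3[of k'] k by auto
      moreover have "k < n" using k e2 assms(2) by linarith
      ultimately show ?thesis using cyc.kind[OF uloc] by blast
    qed
  qed
  have left': "\<forall>j<n. isP c d (u j) \<longrightarrow> ft c (u h) \<le> ft c (u j)"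
    using left n0 unfolding uh unfolding u_def w_def by auto
  have en: "e + 1 < n" using e2 assms(2) by linarith
  have run: "\<forall>j. e < j \<longrightarrow> j < n \<longrightarrow> isI c (u j)"
    using cyc.oneRun[OF uloc en P0 e1 Ilast he left'] .
  have uIff: "isI c (u j) \<longleftrightarrow> e < j" if "j < n" for j
  proof (cases "e < j")
    case True thus ?thesis using run that by auto
  next
    case False
    hence "isP c d (u j)" using P0 by auto
    thus ?thesis using False excl' by blast
  qed
  define r' where "r' = (e + 1 + r) mod n"
  have main: "(\<exists>!A. maximal_arc n (\<lambda>i. interval_seg a b (s i)) A) \<and>
              (\<exists>!A. maximal_arc n (\<lambda>i. permutation_seg a b (s i)) A)"
  proof (rule AL[OF n0, of r' "n - 1 - e"])
    show "r' < n" unfolding r'_def using n0 by simp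
    show "1 \<le> n - 1 - e" using en by simp
    show "n - 1 - e < n" using n0 by simp
  next
    show "\<forall>t'<n. interval_seg a b (s ((r' + t') mod n)) \<longleftrightarrow> t' < n - 1 - e"
    proof (intro allI impI)
      fix t' assume t': "t' < n"
      have ix: "(r' + t') mod n = ((e+1+t') + r) mod n"
      proof -
        have "(e+1+r) + t' = (e+1+t') + r" by simp
        thus ?thesis unfolding r'_def mod_add_left_eq by (simp add: ac_simps)
      qed
      have Is: "interval_seg a b (s ((r' + t') mod n)) \<longleftrightarrow> isI c (s ((r' + t') mod n))"
        using Ieq n0 by simp
      show "interval_seg a b (s ((r' + t') mod n)) \<longleftrightarrow> t' < n - 1 - e"
      proof (cases "e + 1 + t' < n")
        case True
        have "s ((r' + t') mod n) = u (e+1+t')" unfolding ix u_def w_def ..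
        thus ?thesis using Is uIff[OF True] True by auto
      next
        case False
        define j where "j = e + 1 + t' - n"
        have jn: "j \<le> e" "j < n" using t' False en unfolding j_def by auto
        have "(e+1+t') + r = (j + r) + n" using False unfolding j_def by simp
        hence "(r' + t') mod n = (j + r) mod n" unfolding ix by (metis mod_add_self2)
        hence "s ((r' + t') mod n) = u j" unfolding u_def w_def by simp
        thus ?thesis using Is uIff[OF jn(2)] jn False by auto
      qed
    qed
  next
    show "\<forall>i<n. permutation_seg a b (s i) \<longleftrightarrow> \<not> interval_seg a b (s i)"
    proof (intro allI impI)
      fix i assume i: "i < n"
      have "interval_seg a b (s i) \<longleftrightarrow> isI c (s i)" using Ieq i by simp
      moreover have "permutation_seg a b (s i) \<longleftrightarrow> isP c d (s i)" using Peq by simp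
      moreover have "isI c (s i) \<or> isP c d (s i)" using kind i by simp
      moreover have "\<not> (isI c (s i) \<and> isP c d (s i))" using excl' by simp
      ultimately show "permutation_seg a b (s i) \<longleftrightarrow> \<not> interval_seg a b (s i)" by blast
    qed
  qed
  thus ?thesis unfolding interval_arc_def permutation_arc_def .
qed

end
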